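(* Let $N>0$. For any constant $C>0$ there exists a constant $C_0$ such that $$\prod_{j=1}^\infty\big(1+Ce^{C|\lambda|^N-\sqrt{j}/C}\big)\le C_0e^{C_0|\lambda|^{3N}}$$ holds for all $\lambda\in\mathbb{R}$. *)

theory Defs
  imports "HOL-Analysis.Analysis"
begin

end

theory Submission
  imports Defs "HOL-Real_Asymp.Real_Asymp"
begin

lemma summ_exp_sqrt:
  fixes c :: real assumes "c > 0"
  shows "summable (\<lambda>j::nat. exp (- sqrt (real (Suc j)) / c))"
proof (rule summable_comparison_test_bigo)
  show "summable (\<lambda>n. norm (inverse (real n ^ 2)))"
    using inverse_power_summable[of 2, where ?'a=real] by simp
  show "(\<lambda>j::nat. exp (- sqrt (real (Suc j)) / c)) \<in> O(\<lambda>n. inverse (real n ^ 2))"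
    using assms by real_asymp
qed

lemma sq_le_cube: "(a::real) \<ge> 0 \<Longrightarrow> a^2 \<le> 1 + a^3"
proof (cases "a \<le> 1")
  case True
  assume "a \<ge> 0"
  then have "a^2 \<le> 1" using True by (simp add: power_le_one)
  moreover have "a^3 \<ge> 0" using \<open>a \<ge> 0\<close> by simp
  ultimately show ?thesis by linarith
next
  case False
  then have "a^2 \<le> a^3" by (simp add: power_increasing)
  then show ?thesis by linarith
qed

lemma lin_le_cube: "(a::real) \<ge> 0 \<Longrightarrow> a \<le> 1 + a^3"
proof (cases "a \<le> 1")
  case True
  assume "a \<ge> 0" then have "a^3 \<ge> 0" by simp
  then show ?thesis using True by linarith
next
  case False
  then have "a^1 \<le> a^3" by (intro power_increasing) auto
  then show ?thesis by simp
qed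

theorem lemma3p1:
  fixes N C :: real
  assumes "N > 0" and "C > 0"
  shows "\<exists>C0::real. \<forall>l::real.
           convergent_prod (\<lambda>j::nat. 1 + C * exp (C * \<bar>l\<bar> powr N - sqrt (real (Suc j)) / C))
         \<and> (\<Prod>j. 1 + C * exp (C * \<bar>l\<bar> powr N - sqrt (real (Suc j)) / C))
             \<le> C0 * exp (C0 * \<bar>l\<bar> powr (3 * N))"
proof -
  define L where "L = ln (1 + C)"
  define S where "S = suminf (\<lambda>j::nat. C * exp (- sqrt (real (Suc j)) / (2 * C)))"
  define D where "D = L + S + 4*C^2*L + 1"
  define E where "E = 4*C^2*L + 4*C^2 + 1"
  have L0: "L \<ge> 0" unfolding L_def using assms by simp
  have sumS: "summable (\<lambda>j::nat. C * exp (- sqrt (real (Suc j)) / (2 * C)))"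
    using summ_exp_sqrt[of "2*C"] assms by (intro summable_mult) auto
  have E0: "E \<ge> 0" unfolding E_def using L0 by simp
  show ?thesis
  proof (intro exI[of _ "exp D + E * C^3"] allI conjI)
    fix l :: real
    define t where "t = \<bar>l\<bar> powr N"
    define a where "a = C * t"
    have t0: "t \<ge> 0" unfolding t_def by simp
    have a0: "a \<ge> 0" unfolding a_def using t0 assms by simp
    define x where "x = (\<lambda>j::nat. C * exp (C * \<bar>l\<bar> powr N - sqrt (real (Suc j)) / C))"
    have x_eq: "x j = C * exp a * exp (- sqrt (real (Suc j)) / C)" for j
      unfolding x_def a_def t_def by (simp add: exp_diff exp_minus field_simps)
    have sumx: "summable x"
      unfolding x_eq using summ_exp_sqrt[of C] assms by (intro summable_mult) auto
    have cp: "convergent_prod (\<lambda>j. 1 + x j)"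
      using convergent_prod_iff_summable_real[of x] sumx assms unfolding x_def by simp
    then show "convergent_prod (\<lambda>j::nat. 1 + C * exp (C * \<bar>l\<bar> powr N - sqrt (real (Suc j)) / C))"
      unfolding x_def .
    define M where "M = nat \<lceil>4 * a^2 * C^2\<rceil>"
    define b where "b = (\<lambda>j::nat. (if j < M then L + a else 0) + C * exp (- sqrt (real (Suc j)) / (2 * C)))"
    have pt: "1 + x j \<le> exp (b j)" for j
    proof -
      define s where "s = sqrt (real (Suc j))"
      have s0: "s \<ge> 0" unfolding s_def by simp
      have xj: "x j = C * exp (a - s / C)" unfolding x_def a_def t_def s_def by simp
      show ?thesis
      proof (cases "s \<ge> 2 * a * C")
        case True
        have "a - s / C \<le> - s / (2 * C)" using True assms by (simp add: field_simps)
        then have "1 + x j \<le> 1 + C * exp (- s / (2 * C))" unfolding xj using assms by simp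
        also have "\<dots> \<le> exp (C * exp (- s / (2 * C)))" by (rule exp_ge_add_one_self)
        also have "\<dots> \<le> exp (b j)" unfolding b_def s_def using L0 a0 by simp
        finally show ?thesis .
      next
        case False
        have "s^2 < (2*a*C)^2" using False s0 by (intro power_strict_mono) auto
        then have "real (Suc j) < 4 * a^2 * C^2" unfolding s_def by (simp add: power_mult_distrib)
        then have jM: "j < M" unfolding M_def by linarith
        have nn: "0 \<le> C * exp (- sqrt (real (Suc j)) / (2 * C))" using assms(2) by simp
        have Lb: "L + a \<le> b j" unfolding b_def if_P[OF jM] using nn by linarith
        have "1 + x j \<le> 1 + C * exp a" unfolding xj using assms s0 by simp
        also have "\<dots> \<le> (1 + C) * exp a" using assms a0 by (simp add: algebra_simps)
        also have "\<dots> = exp (L + a)" unfolding L_def using assms by (simp add: exp_add)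
        also have "\<dots> \<le> exp (b j)" using Lb by simp
        finally show ?thesis .
      qed
    qed
    have Mb: "real M \<le> 4 * a^2 * C^2 + 1"
    proof -
      have "0 \<le> 4*a^2*C^2" by simp
      then have "real M = real_of_int \<lceil>4*a^2*C^2\<rceil>" unfolding M_def by simp
      moreover have "real_of_int \<lceil>4*a^2*C^2\<rceil> \<le> 4*a^2*C^2 + 1"
        using ceiling_correct[of "4*a^2*C^2"] by linarith
      ultimately show ?thesis by simp
    qed
    have partial: "(\<Prod>i\<le>n. 1 + x i) \<le> exp (real M * (L + a) + S)" for n
    proof -
      have "(\<Prod>i\<le>n. 1 + x i) \<le> (\<Prod>i\<le>n. exp (b i))"
        by (intro prod_mono) (use pt assms in \<open>auto simp: x_def\<close>)
      also have "\<dots> = exp (\<Sum>i\<le>n. b i)" by (simp add: exp_sum)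
      also have "(\<Sum>i\<le>n. b i) \<le> real M * (L + a) + S"
      proof -
        have "(\<Sum>i\<le>n. b i) = (\<Sum>i\<le>n. (if i < M then L + a else 0)) + (\<Sum>i\<le>n. C * exp (- sqrt (real (Suc i)) / (2 * C)))"
          unfolding b_def by (simp add: sum.distrib)
        also have "(\<Sum>i\<le>n. (if i < M then L + a else 0)) \<le> (\<Sum>i<M. (if i < M then L + a else 0))"
        proof -
          have "(\<Sum>i\<le>n. (if i < M then L + a else 0)) = (\<Sum>i\<in>{..n} \<inter> {..<M}. (if i < M then L + a else 0))"
            by (intro sum.mono_neutral_right) auto
          also have "\<dots> \<le> (\<Sum>i<M. (if i < M then L + a else 0))"
            by (intro sum_mono2) (use L0 a0 in auto)
          finally show ?thesis .
        qed
        also have "(\<Sum>i<M. (if i < M then L + a else 0)) = real M * (L + a)" by simp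
        also have "(\<Sum>i\<le>n. C * exp (- sqrt (real (Suc i)) / (2 * C))) \<le> S"
          unfolding S_def using sumS assms by (intro sum_le_suminf) auto
        finally show ?thesis by simp
      qed
      then have "exp (\<Sum>i\<le>n. b i) \<le> exp (real M * (L + a) + S)" by simp
      finally show ?thesis .
    qed
    have "(\<Prod>j. 1 + x j) \<le> exp (real M * (L + a) + S)"
      by (rule LIMSEQ_le_const2[OF convergent_prod_LIMSEQ[OF cp]]) (use partial in auto)
    also have "real M * (L + a) + S \<le> D + E * a^3"
    proof -
      have "real M * (L + a) \<le> (4 * a^2 * C^2 + 1) * (L + a)"
        using Mb L0 a0 by (intro mult_right_mono) auto
      also have "\<dots> = 4*C^2*L * a^2 + 4*C^2 * a^3 + L + a"
        by (simp add: algebra_simps power2_eq_square power3_eq_cube)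
      also have "\<dots> \<le> 4*C^2*L * (1 + a^3) + 4*C^2 * a^3 + L + (1 + a^3)"
        using sq_le_cube[OF a0] lin_le_cube[OF a0] L0
        by (intro add_mono mult_left_mono order.refl) auto
      finally show ?thesis unfolding D_def E_def by (simp add: algebra_simps)
    qed
    then have "exp (real M * (L + a) + S) \<le> exp (D + E * a^3)" by simp
    also have "a^3 = C^3 * \<bar>l\<bar> powr (3 * N)"
    proof -
      have "t^3 = \<bar>l\<bar> powr (3 * N)"
      proof (cases "l = 0")
        case True then show ?thesis unfolding t_def using assms by simp
      next
        case False
        then have "t > 0" unfolding t_def by simp
        then have "t^3 = t powr (real 3)" by (simp add: powr_realpow)
        also have "\<dots> = \<bar>l\<bar> powr (3 * N)" unfolding t_def by (simp add: powr_powr mult.commute)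
        finally show ?thesis .
      qed
      then show ?thesis unfolding a_def by (simp add: power_mult_distrib)
    qed
    also have "exp (D + E * (C^3 * \<bar>l\<bar> powr (3 * N))) = exp D * exp ((E * C^3) * \<bar>l\<bar> powr (3 * N))"
      by (simp add: exp_add mult.assoc)
    also have "\<dots> \<le> (exp D + E * C^3) * exp ((exp D + E * C^3) * \<bar>l\<bar> powr (3 * N))"
      using E0 assms by (intro mult_mono) (auto intro!: mult_right_mono)
    finally show "(\<Prod>j. 1 + C * exp (C * \<bar>l\<bar> powr N - sqrt (real (Suc j)) / C))
             \<le> (exp D + E * C^3) * exp ((exp D + E * C^3) * \<bar>l\<bar> powr (3 * N))"
      unfolding x_def .
  qed
qed

end
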